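(* Let $\mathcal H_A$ be a finite-dimensional Hilbert space, $N\ge 1$, and let $\mathcal F(A)\subseteq\mathcal D(\mathcal H_A)$ be a set of free states and $\mathcal F(A_1\dots A_N)\subseteq\mathcal D(\mathcal H_A^{\otimes N})$ a set of $N$-partite free states. Let $\mathcal F'(A)\subseteq\mathcal F(A)$ be affine and let $\Delta'$ be a resource-censoring map for $(\mathcal F(A),\mathcal F'(A))$ satisfying the standing assumptions below. Then the censorship implemented by $(\Delta')^{\otimes N}$ is breakable if and only if $\mathcal F'(A_1\dots A_N)\setminus\mathcal F(A_1\dots A_N)\neq\emptyset$, where $\mathcal F'(A_1\dots A_N)=\mathrm{Aff}\big(\mathcal F'(A)\otimes\dots\otimes\mathcal F'(A)\big)$ ($N$ factors).
   Context: For a finite-dimensional Hilbert space $\mathcal H$, $\mathcal D(\mathcal H)$ denotes the set of density operators (positive semidefinite, unit trace) on $\mathcal H$. For a set $S\subseteq\mathcal D(\mathcal H)$, its affine hull is $\mathrm{Aff}(S)=\{\sum_a t_a\sigma_a:\ \text{finitely many }\sigma_a\in S,\ t_a\in\mathbb R,\ \sum_a t_a=1\}\cap\mathcal D(\mathcal H)$, and its convex hull $\mathrm{Conv}(S)$ is defined the same way but with $t_a\ge 0$. A set $S$ is called affine if $\mathrm{Aff}(S)=S$. For sets $S_1,\dots,S_N$ of states, $S_1\otimes\dots\otimes S_N=\{\rho_1\otimes\dots\otimes\rho_N:\rho_a\in S_a\}$. A channel is a linear completely positive trace-preserving map. Each of $N$ senders $A_1,\dots,A_N$ holds a copy of the system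 $A$ (Hilbert space $\mathcal H_A$). A resource-censoring (RC) map for $(\mathcal F(A),\mathcal F'(A))$, with $\mathcal F'(A)\subseteq\mathcal F(A)$ affine, is a channel $\Delta'$ on operators on $\mathcal H_A$ with $\Delta'(\rho)\in\mathcal F(A)$ for all $\rho\in\mathcal D(\mathcal H_A)$ and $\Delta'(\sigma)=\sigma$ for all $\sigma\in\mathcal F'(A)$. Standing assumptions: $\Delta'\circ\Delta'=\Delta'$, and $\mathcal F'(A)$ is exactly the set of density operators fixed by $\Delta'$. The censorship is called breakable if there exists $\rho\in\mathcal D(\mathcal H_A^{\otimes N})$ with $\rho\notin\mathcal F(A_1\dots A_N)$ and $(\Delta')^{\otimes N}(\rho)=\rho$; otherwise it is called unbreakable. *)

theory Defs
  imports Complex_Main "Jordan_Normal_Form.Matrix"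
begin

text \<open>Operators on an n-dimensional Hilbert space C^n are n x n complex matrices.\<close>

definition psd :: "nat \<Rightarrow> complex mat \<Rightarrow> bool" where
  "psd n A \<longleftrightarrow> A \<in> carrier_mat n n \<and>
     (\<forall>v \<in> carrier_vec n.
        let q = (\<Sum>i<n. \<Sum>j<n. cnj (v $ i) * A $$ (i, j) * v $ j)
        in Im q = 0 \<and> Re q \<ge> 0)"

definition tr :: "complex mat \<Rightarrow> complex" where
  "tr A = (\<Sum>i<dim_row A. A $$ (i, i))"

definition density :: "nat \<Rightarrow> complex mat \<Rightarrow> bool" where
  "density n \<rho> \<longleftrightarrow> psd n \<rho> \<and> tr \<rho> = 1"

definition Dens :: "nat \<Rightarrow> complex mat set" where
  "Dens n = {\<rho>. density n \<rho>}"

text \<open>Affine hull (intersected with the density operators), real affine coefficients.\<close>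
definition Aff :: "nat \<Rightarrow> complex mat set \<Rightarrow> complex mat set" where
  "Aff n S = {\<rho>. density n \<rho> \<and>
     (\<exists>k (t :: nat \<Rightarrow> real) (\<sigma> :: nat \<Rightarrow> complex mat).
        (\<forall>a<k. \<sigma> a \<in> S) \<and> (\<Sum>a<k. t a) = 1 \<and>
        \<rho> = mat n n (\<lambda>(p, q). \<Sum>a<k. complex_of_real (t a) * \<sigma> a $$ (p, q)))}"

definition affine_set :: "nat \<Rightarrow> complex mat set \<Rightarrow> bool" where
  "affine_set n S \<longleftrightarrow> Aff n S = S"

text \<open>Kronecker (tensor) product; index of C^m (x) C^n is i*n+k.\<close>
definition kron :: "complex mat \<Rightarrow> complex mat \<Rightarrow> complex mat" where
  "kron A B = mat (dim_row A * dim_row B) (dim_col A * dim_col B)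
     (\<lambda>(p, q). A $$ (p div dim_row B, q div dim_col B) * B $$ (p mod dim_row B, q mod dim_col B))"

fun tensor_list :: "complex mat list \<Rightarrow> complex mat" where
  "tensor_list [] = 1\<^sub>m 1"
| "tensor_list (\<rho> # \<rho>s) = kron \<rho> (tensor_list \<rho>s)"

definition tensor_pow_set :: "complex mat set \<Rightarrow> nat \<Rightarrow> complex mat set" where
  "tensor_pow_set S N = {tensor_list \<rho>s | \<rho>s. length \<rho>s = N \<and> set \<rho>s \<subseteq> S}"

definition unit_op :: "nat \<Rightarrow> nat \<Rightarrow> nat \<Rightarrow> complex mat" where
  "unit_op m i j = mat m m (\<lambda>(a, b). if a = i \<and> b = j then 1 else 0)"

text \<open>Tensor product of linear maps Phi (on m x m) and Psi (on n x n): the unique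
  linear extension of X (x) Y \<mapsto> Phi X (x) Psi Y, written through matrix units.\<close>
definition map_tensor :: "nat \<Rightarrow> (complex mat \<Rightarrow> complex mat) \<Rightarrow> nat \<Rightarrow> (complex mat \<Rightarrow> complex mat)
    \<Rightarrow> complex mat \<Rightarrow> complex mat" where
  "map_tensor m \<Phi> n \<Psi> X = mat (m * n) (m * n) (\<lambda>(p, q).
     \<Sum>i<m. \<Sum>j<m. \<Sum>k<n. \<Sum>l<n.
       X $$ (i * n + k, j * n + l) * \<Phi> (unit_op m i j) $$ (p div n, q div n)
         * \<Psi> (unit_op n k l) $$ (p mod n, q mod n))"

fun map_tensor_pow :: "nat \<Rightarrow> (complex mat \<Rightarrow> complex mat) \<Rightarrow> nat \<Rightarrow> complex mat \<Rightarrow> complex mat" where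
  "map_tensor_pow d \<Phi> 0 = (\<lambda>X. X)"
| "map_tensor_pow d \<Phi> (Suc N) = map_tensor d \<Phi> (d ^ N) (map_tensor_pow d \<Phi> N)"

definition linear_op_map :: "nat \<Rightarrow> (complex mat \<Rightarrow> complex mat) \<Rightarrow> bool" where
  "linear_op_map d \<Phi> \<longleftrightarrow>
     (\<forall>X \<in> carrier_mat d d. \<Phi> X \<in> carrier_mat d d) \<and>
     (\<forall>X \<in> carrier_mat d d. \<forall>Y \<in> carrier_mat d d. \<forall>a b :: complex.
        \<Phi> (a \<cdot>\<^sub>m X + b \<cdot>\<^sub>m Y) = a \<cdot>\<^sub>m \<Phi> X + b \<cdot>\<^sub>m \<Phi> Y)"

definition completely_positive :: "nat \<Rightarrow> (complex mat \<Rightarrow> complex mat) \<Rightarrow> bool" where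
  "completely_positive d \<Phi> \<longleftrightarrow>
     (\<forall>k. \<forall>X. psd (k * d) X \<longrightarrow> psd (k * d) (map_tensor k (\<lambda>Y. Y) d \<Phi> X))"

definition trace_preserving :: "nat \<Rightarrow> (complex mat \<Rightarrow> complex mat) \<Rightarrow> bool" where
  "trace_preserving d \<Phi> \<longleftrightarrow> (\<forall>X \<in> carrier_mat d d. tr (\<Phi> X) = tr X)"

definition channel :: "nat \<Rightarrow> (complex mat \<Rightarrow> complex mat) \<Rightarrow> bool" where
  "channel d \<Phi> \<longleftrightarrow> linear_op_map d \<Phi> \<and> completely_positive d \<Phi> \<and> trace_preserving d \<Phi>"

definition RC_map :: "nat \<Rightarrow> complex mat set \<Rightarrow> complex mat set \<Rightarrow> (complex mat \<Rightarrow> complex mat) \<Rightarrow> bool" where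
  "RC_map d F F' \<Delta> \<longleftrightarrow> channel d \<Delta> \<and> (\<forall>\<rho> \<in> Dens d. \<Delta> \<rho> \<in> F) \<and> (\<forall>\<sigma> \<in> F'. \<Delta> \<sigma> = \<sigma>)"

definition breakable :: "nat \<Rightarrow> nat \<Rightarrow> complex mat set \<Rightarrow> (complex mat \<Rightarrow> complex mat) \<Rightarrow> bool" where
  "breakable d N FN \<Delta> \<longleftrightarrow>
     (\<exists>\<rho> \<in> Dens (d ^ N). \<rho> \<notin> FN \<and> map_tensor_pow d \<Delta> N \<rho> = \<rho>)"

end

theory Submission
  imports Defs
begin



lemma idx_bound: "(i::nat) < m \<Longrightarrow> k < n \<Longrightarrow> i*n+k < m*n"
proof -
  assume a: "i < m" "k < n"
  have "Suc i * n \<le> m * n" using a by (intro mult_le_mono1) simp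
  thus ?thesis using a by simp
qed

lemma kron_carrier: "A \<in> carrier_mat m m \<Longrightarrow> B \<in> carrier_mat n n \<Longrightarrow> kron A B \<in> carrier_mat (m*n) (m*n)"
  unfolding kron_def by auto

lemma kron_index: "A \<in> carrier_mat m m \<Longrightarrow> B \<in> carrier_mat n n \<Longrightarrow> p < m*n \<Longrightarrow> q < m*n \<Longrightarrow>
   kron A B $$ (p,q) = A $$ (p div n, q div n) * B $$ (p mod n, q mod n)"
  unfolding kron_def by auto

lemma kron_index2: "A \<in> carrier_mat m m \<Longrightarrow> B \<in> carrier_mat n n \<Longrightarrow> i < m \<Longrightarrow> j < m \<Longrightarrow> k < n \<Longrightarrow> l < n \<Longrightarrow>
   kron A B $$ (i*n+k,j*n+l) = A $$ (i,j) * B $$ (k,l)"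
  by (subst kron_index[of A m B n]) (auto simp: idx_bound)

lemma lin_zero: fixes X :: "complex mat" assumes "linear_op_map n \<Phi>" "X \<in> carrier_mat n n"
  shows "\<Phi> (0\<^sub>m n n) = 0\<^sub>m n n"
proof -
  have "\<Phi> (0 \<cdot>\<^sub>m X + 0 \<cdot>\<^sub>m X) = 0 \<cdot>\<^sub>m \<Phi> X + 0 \<cdot>\<^sub>m \<Phi> X" using assms unfolding linear_op_map_def by blast
  moreover have "0 \<cdot>\<^sub>m X + 0 \<cdot>\<^sub>m X = 0\<^sub>m n n" using assms(2) by auto
  moreover have "\<Phi> X \<in> carrier_mat n n" using assms unfolding linear_op_map_def by blast
  hence "0 \<cdot>\<^sub>m \<Phi> X + 0 \<cdot>\<^sub>m \<Phi> X = 0\<^sub>m n n" by auto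
  ultimately show ?thesis by simp
qed

lemma lin_add: fixes X Y :: "complex mat" assumes "linear_op_map n \<Phi>" "X \<in> carrier_mat n n" "Y \<in> carrier_mat n n"
  shows "\<Phi> (X + Y) = \<Phi> X + \<Phi> Y"
proof -
  have "\<Phi> (1 \<cdot>\<^sub>m X + 1 \<cdot>\<^sub>m Y) = 1 \<cdot>\<^sub>m \<Phi> X + 1 \<cdot>\<^sub>m \<Phi> Y" using assms unfolding linear_op_map_def by blast
  moreover have "1 \<cdot>\<^sub>m X = X" "1 \<cdot>\<^sub>m Y = Y" using assms(2,3) by auto
  moreover have "1 \<cdot>\<^sub>m \<Phi> X = \<Phi> X" "1 \<cdot>\<^sub>m \<Phi> Y = \<Phi> Y" using assms unfolding linear_op_map_def by auto
  ultimately show ?thesis by simp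
qed

lemma lin_smult: fixes X :: "complex mat" assumes "linear_op_map n \<Phi>" "X \<in> carrier_mat n n"
  shows "\<Phi> (c \<cdot>\<^sub>m X) = c \<cdot>\<^sub>m \<Phi> X"
proof -
  have "\<Phi> (c \<cdot>\<^sub>m X + 0 \<cdot>\<^sub>m X) = c \<cdot>\<^sub>m \<Phi> X + 0 \<cdot>\<^sub>m \<Phi> X" using assms unfolding linear_op_map_def by blast
  moreover have "c \<cdot>\<^sub>m X + 0 \<cdot>\<^sub>m X = c \<cdot>\<^sub>m X" using assms(2) by auto
  moreover have "\<Phi> X \<in> carrier_mat n n" using assms unfolding linear_op_map_def by blast
  hence "c \<cdot>\<^sub>m \<Phi> X + 0 \<cdot>\<^sub>m \<Phi> X = c \<cdot>\<^sub>m \<Phi> X" by auto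
  ultimately show ?thesis by simp
qed

lemma lin_carrier: "linear_op_map n \<Phi> \<Longrightarrow> X \<in> carrier_mat n n \<Longrightarrow> \<Phi> X \<in> carrier_mat n n"
  unfolding linear_op_map_def by blast

lemma lin_sum: fixes X :: "_ \<Rightarrow> complex mat" assumes "linear_op_map n \<Phi>" "finite I" "\<And>i. i \<in> I \<Longrightarrow> X i \<in> carrier_mat n n"
  shows "\<Phi> (mat n n (\<lambda>(p,q). \<Sum>i\<in>I. c i * X i $$ (p,q))) = mat n n (\<lambda>(p,q). \<Sum>i\<in>I. c i * \<Phi> (X i) $$ (p,q))"
  using assms(2,3)
proof (induction I rule: finite_induct)
  case empty
  have z1: "mat n n (\<lambda>(p,q). \<Sum>i\<in>{}. c i * X i $$ (p,q)) = 0\<^sub>m n n" by auto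
  have z2: "mat n n (\<lambda>(p,q). \<Sum>i\<in>{}. c i * \<Phi> (X i) $$ (p,q)) = 0\<^sub>m n n" by auto
  show ?case unfolding z1 z2 using lin_zero[OF assms(1), of "0\<^sub>m n n"] by simp
next
  case (insert x F)
  have cx: "X x \<in> carrier_mat n n" using insert by auto
  let ?S = "mat n n (\<lambda>(p,q). \<Sum>i\<in>F. c i * X i $$ (p,q))"
  have e1: "mat n n (\<lambda>(p,q). \<Sum>i\<in>insert x F. c i * X i $$ (p,q)) = c x \<cdot>\<^sub>m X x + ?S"
    using insert carrier_matD[OF cx] by (intro eq_matI) auto
  have "\<Phi> (c x \<cdot>\<^sub>m X x + ?S) = \<Phi> (c x \<cdot>\<^sub>m X x) + \<Phi> ?S"
    by (rule lin_add[OF assms(1)]) (use cx in auto)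
  also have "\<dots> = c x \<cdot>\<^sub>m \<Phi> (X x) + mat n n (\<lambda>(p,q). \<Sum>i\<in>F. c i * \<Phi> (X i) $$ (p,q))"
  proof -
    have ih: "\<Phi> ?S = mat n n (\<lambda>(p,q). \<Sum>i\<in>F. c i * \<Phi> (X i) $$ (p,q))"
      by (rule insert.IH) (use insert.prems in auto)
    show ?thesis by (simp only: ih lin_smult[OF assms(1) cx])
  qed
  also have "\<dots> = mat n n (\<lambda>(p,q). \<Sum>i\<in>insert x F. c i * \<Phi> (X i) $$ (p,q))"
    using insert carrier_matD[OF lin_carrier[OF assms(1) cx]] by (intro eq_matI) auto
  finally show ?case by (simp only: e1)
qed




lemma mt_carrier: "map_tensor m \<Phi> n \<Psi> X \<in> carrier_mat (m*n) (m*n)"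
  unfolding map_tensor_def by auto

lemma mt_linear: "linear_op_map (m*n) (map_tensor m \<Phi> n \<Psi>)"
  unfolding linear_op_map_def
proof (intro conjI ballI allI)
  fix X show "map_tensor m \<Phi> n \<Psi> X \<in> carrier_mat (m*n) (m*n)" by (rule mt_carrier)
next
  fix X Y :: "complex mat" and a b :: complex
  assume X: "X \<in> carrier_mat (m*n) (m*n)" and Y: "Y \<in> carrier_mat (m*n) (m*n)"
  have e: "(a \<cdot>\<^sub>m X + b \<cdot>\<^sub>m Y) $$ (i*n+k, j*n+l) = a * X $$ (i*n+k, j*n+l) + b * Y $$ (i*n+k, j*n+l)"
    if "i < m" "j < m" "k < n" "l < n" for i j k l
    using X Y idx_bound[OF that(1,3)] idx_bound[OF that(2,4)] by auto
  show "map_tensor m \<Phi> n \<Psi> (a \<cdot>\<^sub>m X + b \<cdot>\<^sub>m Y) = a \<cdot>\<^sub>m map_tensor m \<Phi> n \<Psi> X + b \<cdot>\<^sub>m map_tensor m \<Phi> n \<Psi> Y"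
  proof (rule eq_matI)
    fix p q assume pq: "p < dim_row (a \<cdot>\<^sub>m map_tensor m \<Phi> n \<Psi> X + b \<cdot>\<^sub>m map_tensor m \<Phi> n \<Psi> Y)"
      "q < dim_col (a \<cdot>\<^sub>m map_tensor m \<Phi> n \<Psi> X + b \<cdot>\<^sub>m map_tensor m \<Phi> n \<Psi> Y)"
    hence pq': "p < m*n" "q < m*n" unfolding map_tensor_def by auto
    have "map_tensor m \<Phi> n \<Psi> (a \<cdot>\<^sub>m X + b \<cdot>\<^sub>m Y) $$ (p,q) =
      (\<Sum>i<m. \<Sum>j<m. \<Sum>k<n. \<Sum>l<n.
       (a * X $$ (i * n + k, j * n + l) + b * Y $$ (i * n + k, j * n + l)) * \<Phi> (unit_op m i j) $$ (p div n, q div n)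
         * \<Psi> (unit_op n k l) $$ (p mod n, q mod n))"
      unfolding map_tensor_def using pq' by simp (intro sum.cong refl, simp add: e)
    also have "\<dots> = a * map_tensor m \<Phi> n \<Psi> X $$ (p,q) + b * map_tensor m \<Phi> n \<Psi> Y $$ (p,q)"
      unfolding map_tensor_def using pq' by (simp add: sum_distrib_left sum.distrib ring_distribs mult.assoc)
    also have "\<dots> = (a \<cdot>\<^sub>m map_tensor m \<Phi> n \<Psi> X + b \<cdot>\<^sub>m map_tensor m \<Phi> n \<Psi> Y) $$ (p,q)"
      using pq' carrier_matD[OF mt_carrier[of m \<Phi> n \<Psi> X]] carrier_matD[OF mt_carrier[of m \<Phi> n \<Psi> Y]] by simp
    finally show "map_tensor m \<Phi> n \<Psi> (a \<cdot>\<^sub>m X + b \<cdot>\<^sub>m Y) $$ (p,q) = (a \<cdot>\<^sub>m map_tensor m \<Phi> n \<Psi> X + b \<cdot>\<^sub>m map_tensor m \<Phi> n \<Psi> Y) $$ (p,q)" .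
  qed (auto simp: map_tensor_def)
qed

lemma unit_op_carrier: "unit_op m i j \<in> carrier_mat m m"
  unfolding unit_op_def by auto

lemma unit_expand: assumes "A \<in> carrier_mat m m"
  shows "A = mat m m (\<lambda>(p,q). \<Sum>x\<in>{..<m}\<times>{..<m}. A $$ x * unit_op m (fst x) (snd x) $$ (p,q))"
proof (rule eq_matI)
  fix p q assume "p < dim_row (mat m m (\<lambda>(p,q). \<Sum>x\<in>{..<m}\<times>{..<m}. A $$ x * unit_op m (fst x) (snd x) $$ (p,q)))"
    "q < dim_col (mat m m (\<lambda>(p,q). \<Sum>x\<in>{..<m}\<times>{..<m}. A $$ x * unit_op m (fst x) (snd x) $$ (p,q)))"
  hence pq: "p < m" "q < m" by auto
  have "(\<Sum>x\<in>{..<m}\<times>{..<m}. A $$ x * unit_op m (fst x) (snd x) $$ (p,q)) =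
        (\<Sum>x\<in>{..<m}\<times>{..<m}. if x = (p,q) then A $$ (p,q) else 0)"
    unfolding unit_op_def using pq by (intro sum.cong) auto
  also have "\<dots> = A $$ (p,q)" using pq by simp
  finally show "A $$ (p,q) = mat m m (\<lambda>(p,q). \<Sum>x\<in>{..<m}\<times>{..<m}. A $$ x * unit_op m (fst x) (snd x) $$ (p,q)) $$ (p,q)"
    using pq by simp
qed (use assms in auto)

lemma lin_expand: assumes "linear_op_map m \<Phi>" "A \<in> carrier_mat m m" "p < m" "q < m"
  shows "\<Phi> A $$ (p,q) = (\<Sum>i<m. \<Sum>j<m. A $$ (i,j) * \<Phi> (unit_op m i j) $$ (p,q))"
proof -
  have "\<Phi> A = \<Phi> (mat m m (\<lambda>(p,q). \<Sum>x\<in>{..<m}\<times>{..<m}. A $$ x * unit_op m (fst x) (snd x) $$ (p,q)))"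
    using unit_expand[OF assms(2)] by simp
  also have "\<dots> = mat m m (\<lambda>(p,q). \<Sum>x\<in>{..<m}\<times>{..<m}. A $$ x * \<Phi> (unit_op m (fst x) (snd x)) $$ (p,q))"
    by (rule lin_sum[OF assms(1)]) (auto simp: unit_op_carrier)
  finally have "\<Phi> A $$ (p,q) = (\<Sum>x\<in>{..<m}\<times>{..<m}. A $$ x * \<Phi> (unit_op m (fst x) (snd x)) $$ (p,q))"
    using assms(3,4) by simp
  also have "\<dots> = (\<Sum>i<m. \<Sum>j<m. A $$ (i,j) * \<Phi> (unit_op m i j) $$ (p,q))"
    by (simp add: sum.cartesian_product case_prod_beta)
  finally show ?thesis .
qed




lemma mt_kron: assumes "linear_op_map m \<Phi>" "linear_op_map n \<Psi>" "A \<in> carrier_mat m m" "B \<in> carrier_mat n n"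
  shows "map_tensor m \<Phi> n \<Psi> (kron A B) = kron (\<Phi> A) (\<Psi> B)"
proof (rule eq_matI)
  have cA: "\<Phi> A \<in> carrier_mat m m" and cB: "\<Psi> B \<in> carrier_mat n n" using lin_carrier[OF assms(1,3)] lin_carrier[OF assms(2,4)] by auto
  show "dim_row (map_tensor m \<Phi> n \<Psi> (kron A B)) = dim_row (kron (\<Phi> A) (\<Psi> B))"
    "dim_col (map_tensor m \<Phi> n \<Psi> (kron A B)) = dim_col (kron (\<Phi> A) (\<Psi> B))"
    using carrier_matD[OF mt_carrier[of m \<Phi> n \<Psi> "kron A B"]] carrier_matD[OF kron_carrier[OF cA cB]] by simp_all
  fix p q assume "p < dim_row (kron (\<Phi> A) (\<Psi> B))" "q < dim_col (kron (\<Phi> A) (\<Psi> B))"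
  hence pq: "p < m*n" "q < m*n" using kron_carrier[OF cA cB] by auto
  hence n0: "n > 0" by (cases n) auto
  have dm: "p div n < m" "q div n < m" using pq by (auto simp: less_mult_imp_div_less)
  have mm: "p mod n < n" "q mod n < n" using n0 by auto
  have "map_tensor m \<Phi> n \<Psi> (kron A B) $$ (p,q) =
     (\<Sum>i<m. \<Sum>j<m. \<Sum>k<n. \<Sum>l<n.
       (A $$ (i,j) * \<Phi> (unit_op m i j) $$ (p div n, q div n)) * (B $$ (k,l)
         * \<Psi> (unit_op n k l) $$ (p mod n, q mod n)))"
    unfolding map_tensor_def using pq by simp (intro sum.cong refl, simp add: kron_index2[OF assms(3,4)] mult_ac)
  also have "\<dots> = (\<Sum>i<m. \<Sum>j<m. A $$ (i,j) * \<Phi> (unit_op m i j) $$ (p div n, q div n)) *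
                  (\<Sum>k<n. \<Sum>l<n. B $$ (k,l) * \<Psi> (unit_op n k l) $$ (p mod n, q mod n))"
    by (simp only: sum_distrib_right) (simp only: sum_distrib_left)
  also have "\<dots> = \<Phi> A $$ (p div n, q div n) * \<Psi> B $$ (p mod n, q mod n)"
    using lin_expand[OF assms(1,3) dm] lin_expand[OF assms(2,4) mm] by simp
  also have "\<dots> = kron (\<Phi> A) (\<Psi> B) $$ (p,q)" using kron_index[OF cA cB pq] by simp
  finally show "map_tensor m \<Phi> n \<Psi> (kron A B) $$ (p,q) = kron (\<Phi> A) (\<Psi> B) $$ (p,q)" .
qed

lemma mtp_linear: "linear_op_map (d^N) (map_tensor_pow d \<Phi> N)"
proof (cases N)
  case 0 thus ?thesis unfolding linear_op_map_def by auto
next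
  case (Suc M) thus ?thesis using mt_linear[where m=d and \<Phi>=\<Phi> and n="d^M" and \<Psi>="map_tensor_pow d \<Phi> M"] by simp
qed

lemma tl_carrier: "set xs \<subseteq> carrier_mat d d \<Longrightarrow> tensor_list xs \<in> carrier_mat (d^length xs) (d^length xs)"
proof (induction xs)
  case (Cons x xs)
  thus ?case using kron_carrier[of x d "tensor_list xs" "d^length xs"] by simp
qed simp

lemma mtp_tl: assumes "linear_op_map d \<Phi>" "set xs \<subseteq> carrier_mat d d"
  shows "map_tensor_pow d \<Phi> (length xs) (tensor_list xs) = tensor_list (map \<Phi> xs)"
  using assms(2)
proof (induction xs)
  case Nil thus ?case by simp
next
  case (Cons x xs)
  have "map_tensor_pow d \<Phi> (length (x#xs)) (tensor_list (x#xs)) =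
    map_tensor d \<Phi> (d ^ length xs) (map_tensor_pow d \<Phi> (length xs)) (kron x (tensor_list xs))" by simp
  also have "\<dots> = kron (\<Phi> x) (map_tensor_pow d \<Phi> (length xs) (tensor_list xs))"
  proof (rule mt_kron[OF assms(1) mtp_linear])
    show "x \<in> carrier_mat d d" using Cons.prems by simp
    show "tensor_list xs \<in> carrier_mat (d ^ length xs) (d ^ length xs)" using Cons.prems by (intro tl_carrier) simp
  qed
  also have "\<dots> = kron (\<Phi> x) (tensor_list (map \<Phi> xs))" using Cons.IH Cons.prems by simp
  finally show ?case by simp
qed




inductive_set cspan :: "nat \<Rightarrow> complex mat set \<Rightarrow> complex mat set" for n S where
  zero: "0\<^sub>m n n \<in> cspan n S"
| gen: "s \<in> S \<Longrightarrow> s \<in> carrier_mat n n \<Longrightarrow> s \<in> cspan n S"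
| add: "X \<in> cspan n S \<Longrightarrow> Y \<in> cspan n S \<Longrightarrow> X + Y \<in> cspan n S"
| smult: "X \<in> cspan n S \<Longrightarrow> c \<cdot>\<^sub>m X \<in> cspan n S"

lemma cspan_carrier: "X \<in> cspan n S \<Longrightarrow> X \<in> carrier_mat n n"
  by (induction rule: cspan.induct) auto

lemma cspan_mono: "X \<in> cspan n S \<Longrightarrow> S \<inter> carrier_mat n n \<subseteq> T \<Longrightarrow> X \<in> cspan n T"
  by (induction rule: cspan.induct) (auto intro: cspan.intros)

lemma cspan_sum: assumes "finite I" "\<And>i. i \<in> I \<Longrightarrow> X i \<in> cspan n S"
  shows "mat n n (\<lambda>(p,q). \<Sum>i\<in>I. c i * X i $$ (p,q)) \<in> cspan n S"
  using assms
proof (induction I rule: finite_induct)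
  case empty
  have z1: "mat n n (\<lambda>(p,q). \<Sum>i\<in>{}. c i * X i $$ (p,q)) = 0\<^sub>m n n" by auto
  show ?case unfolding z1 by (rule cspan.zero)
next
  case (insert x F)
  have cx: "X x \<in> carrier_mat n n" using insert cspan_carrier by auto
  let ?S = "mat n n (\<lambda>(p,q). \<Sum>i\<in>F. c i * X i $$ (p,q))"
  have e1: "mat n n (\<lambda>(p,q). \<Sum>i\<in>insert x F. c i * X i $$ (p,q)) = c x \<cdot>\<^sub>m X x + ?S"
    using insert carrier_matD[OF cx] by (intro eq_matI) auto
  have ih: "?S \<in> cspan n S" by (rule insert.IH) (use insert.prems in auto)
  have "c x \<cdot>\<^sub>m X x + ?S \<in> cspan n S"
    by (intro cspan.add cspan.smult ih) (use insert.prems in auto)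
  thus ?case by (simp only: e1)
qed

lemma cspan_lin: assumes "linear_op_map n \<Phi>" "X \<in> cspan n S"
  "\<And>s. s \<in> S \<Longrightarrow> s \<in> carrier_mat n n \<Longrightarrow> \<Phi> s \<in> cspan n T"
  shows "\<Phi> X \<in> cspan n T"
  using assms(2)
proof (induction rule: cspan.induct)
  case zero
  thus ?case using lin_zero[OF assms(1), of "0\<^sub>m n n"] cspan.zero by simp
next
  case (gen s) thus ?case using assms(3) by simp
next
  case (add X Y)
  thus ?case using lin_add[OF assms(1) cspan_carrier cspan_carrier] cspan.add by metis
next
  case (smult X c)
  thus ?case using lin_smult[OF assms(1) cspan_carrier] cspan.smult by metis
qed

lemma kron_zero_l: "B \<in> carrier_mat n n \<Longrightarrow> kron (0\<^sub>m m m) B = 0\<^sub>m (m*n) (m*n)"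
  by (intro eq_matI) (auto simp: kron_def less_mult_imp_div_less)

lemma kron_zero_r: "A \<in> carrier_mat m m \<Longrightarrow> kron A (0\<^sub>m n n) = 0\<^sub>m (m*n) (m*n)"
proof (intro eq_matI)
  fix i j assume "A \<in> carrier_mat m m" "i < dim_row (0\<^sub>m (m * n) (m * n))" "j < dim_col (0\<^sub>m (m * n) (m * n))"
  moreover hence "n > 0" by (cases n) auto
  ultimately show "kron A (0\<^sub>m n n) $$ (i, j) = 0\<^sub>m (m * n) (m * n) $$ (i, j)" by (auto simp: kron_def)
qed (auto simp: kron_def)

lemma kron_add_l: "X \<in> carrier_mat m m \<Longrightarrow> Y \<in> carrier_mat m m \<Longrightarrow> B \<in> carrier_mat n n \<Longrightarrow>
  kron (X + Y) B = kron X B + kron Y B"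
  by (intro eq_matI) (auto simp: kron_def less_mult_imp_div_less ring_distribs)

lemma kron_add_r: assumes "A \<in> carrier_mat m m" "X \<in> carrier_mat n n" "Y \<in> carrier_mat n n"
  shows "kron A (X + Y) = kron A X + kron A Y"
proof (intro eq_matI)
  fix i j assume "i < dim_row (kron A X + kron A Y)" "j < dim_col (kron A X + kron A Y)"
  moreover hence "n > 0" using assms by (cases n) (auto simp: kron_def)
  ultimately show "kron A (X + Y) $$ (i, j) = (kron A X + kron A Y) $$ (i, j)" using assms
    by (auto simp: kron_def ring_distribs)
qed (use assms in \<open>auto simp: kron_def\<close>)

lemma kron_smult_l: "X \<in> carrier_mat m m \<Longrightarrow> B \<in> carrier_mat n n \<Longrightarrow>
  kron (c \<cdot>\<^sub>m X) B = c \<cdot>\<^sub>m kron X B"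
  by (intro eq_matI) (auto simp: kron_def less_mult_imp_div_less)

lemma kron_smult_r: assumes "A \<in> carrier_mat m m" "X \<in> carrier_mat n n"
  shows "kron A (c \<cdot>\<^sub>m X) = c \<cdot>\<^sub>m kron A X"
proof (intro eq_matI)
  fix i j assume "i < dim_row (c \<cdot>\<^sub>m kron A X)" "j < dim_col (c \<cdot>\<^sub>m kron A X)"
  moreover hence "n > 0" using assms by (cases n) (auto simp: kron_def)
  ultimately show "kron A (c \<cdot>\<^sub>m X) $$ (i, j) = (c \<cdot>\<^sub>m kron A X) $$ (i, j)" using assms
    by (auto simp: kron_def)
qed (use assms in \<open>auto simp: kron_def\<close>)

definition kset :: "nat \<Rightarrow> nat \<Rightarrow> complex mat set \<Rightarrow> complex mat set \<Rightarrow> complex mat set" where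
  "kset m n S1 S2 = {kron s t | s t. s \<in> S1 \<and> t \<in> S2 \<and> s \<in> carrier_mat m m \<and> t \<in> carrier_mat n n}"

lemma cspan_kron_r: assumes "s \<in> S1" "s \<in> carrier_mat m m" "B \<in> cspan n S2"
  shows "kron s B \<in> cspan (m*n) (kset m n S1 S2)"
  using assms(3)
proof (induction rule: cspan.induct)
  case zero thus ?case using kron_zero_r[OF assms(2)] cspan.zero by metis
next
  case (gen t) thus ?case using assms by (intro cspan.gen) (auto simp: kset_def intro: kron_carrier)
next
  case (add X Y) thus ?case using kron_add_r[OF assms(2) cspan_carrier cspan_carrier] cspan.add by metis
next
  case (smult X c) thus ?case using kron_smult_r[OF assms(2) cspan_carrier] cspan.smult by metis
qed

lemma cspan_kron: assumes "A \<in> cspan m S1" "B \<in> cspan n S2"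
  shows "kron A B \<in> cspan (m*n) (kset m n S1 S2)"
  using assms(1)
proof (induction rule: cspan.induct)
  case zero thus ?case using kron_zero_l[OF cspan_carrier[OF assms(2)]] cspan.zero by metis
next
  case (gen s) thus ?case using cspan_kron_r assms(2) by blast
next
  case (add X Y) thus ?case using kron_add_l[OF cspan_carrier cspan_carrier cspan_carrier[OF assms(2)]] cspan.add by metis
next
  case (smult X c) thus ?case using kron_smult_l[OF cspan_carrier cspan_carrier[OF assms(2)]] cspan.smult by metis
qed

lemma sum_split_add: "(\<Sum>a<k1+(k2::nat). f a) = (\<Sum>a<k1. f a) + (\<Sum>a<k2. f (k1+a))"
  by (induction k2) (simp_all add: add.assoc)

lemma cspan_msum: assumes "X \<in> cspan n S"
  shows "\<exists>(k::nat) c \<sigma>. (\<forall>a<k. \<sigma> a \<in> S) \<and> X = mat n n (\<lambda>(p,q). \<Sum>a<k. c a * \<sigma> a $$ (p,q))"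
  using assms
proof (induction rule: cspan.induct)
  case zero
  show ?case by (intro exI[where x="0::nat"] exI[where x="\<lambda>_. 0::complex"] exI[where x="\<lambda>_. 0\<^sub>m n n"] conjI) (auto intro!: eq_matI)
next
  case (gen s)
  show ?case
  proof (intro exI conjI)
    show "\<forall>a<(1::nat). (\<lambda>_. s) a \<in> S" using gen by auto
    show "s = mat n n (\<lambda>(p,q). \<Sum>a<(1::nat). (\<lambda>_. 1) a * (\<lambda>_. s) a $$ (p,q))"
      using gen by (intro eq_matI) auto
  qed
next
  case (add X Y)
  then obtain k1 k2 :: nat and c1 \<sigma>1 c2 \<sigma>2 where h1: "\<forall>a<k1. \<sigma>1 a \<in> S" "X = mat n n (\<lambda>(p,q). \<Sum>a<k1. c1 a * \<sigma>1 a $$ (p,q))"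
    and h2: "\<forall>a<k2. \<sigma>2 a \<in> S" "Y = mat n n (\<lambda>(p,q). \<Sum>a<k2. c2 a * \<sigma>2 a $$ (p,q))" by blast
  define c where "c a = (if a < k1 then c1 a else c2 (a - k1))" for a
  define \<sigma> where "\<sigma> a = (if a < k1 then \<sigma>1 a else \<sigma>2 (a - k1))" for a
  show ?case
  proof (intro exI conjI)
    show "\<forall>a<k1+k2. \<sigma> a \<in> S" using h1 h2 unfolding \<sigma>_def by auto
    show "X + Y = mat n n (\<lambda>(p,q). \<Sum>a<k1+k2. c a * \<sigma> a $$ (p,q))"
    proof (rule eq_matI)
      fix p q assume "p < dim_row (mat n n (\<lambda>(p,q). \<Sum>a<k1+k2. c a * \<sigma> a $$ (p,q)))"
        "q < dim_col (mat n n (\<lambda>(p,q). \<Sum>a<k1+k2. c a * \<sigma> a $$ (p,q)))"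
      hence pq: "p < n" "q < n" by auto
      have "(\<Sum>a<k1+k2. c a * \<sigma> a $$ (p,q)) = (\<Sum>a<k1. c a * \<sigma> a $$ (p,q)) + (\<Sum>a<k2. c (k1+a) * \<sigma> (k1+a) $$ (p,q))"
        by (rule sum_split_add)
      also have "\<dots> = (\<Sum>a<k1. c1 a * \<sigma>1 a $$ (p,q)) + (\<Sum>a<k2. c2 a * \<sigma>2 a $$ (p,q))"
        unfolding c_def \<sigma>_def by simp
      finally show "(X + Y) $$ (p,q) = mat n n (\<lambda>(p,q). \<Sum>a<k1+k2. c a * \<sigma> a $$ (p,q)) $$ (p,q)"
        using pq h1 h2 by simp
    qed (use h1 h2 in auto)
  qed
next
  case (smult X c0)
  then obtain k :: nat and c \<sigma> where h: "\<forall>a<k. \<sigma> a \<in> S" "X = mat n n (\<lambda>(p,q). \<Sum>a<k. c a * \<sigma> a $$ (p,q))" by blast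
  show ?case
  proof (intro exI conjI)
    show "\<forall>a<k. \<sigma> a \<in> S" by (rule h(1))
    show "c0 \<cdot>\<^sub>m X = mat n n (\<lambda>(p,q). \<Sum>a<k. (c0 * c a) * \<sigma> a $$ (p,q))"
      using h(2) by (intro eq_matI) (auto simp: sum_distrib_left mult.assoc)
  qed
qed




lemma psd_carrier: "psd n A \<Longrightarrow> A \<in> carrier_mat n n" unfolding psd_def by blast

definition vv :: "nat \<Rightarrow> nat \<Rightarrow> complex \<Rightarrow> complex \<Rightarrow> nat \<Rightarrow> complex" where
  "vv p q \<alpha> \<beta> t = (if t = p then \<alpha> else 0) + (if t = q then \<beta> else 0)"

lemma sum_vv: assumes "p < n" "q < n"
  shows "(\<Sum>j<n. f j * vv p q \<alpha> \<beta> j) = f p * \<alpha> + f q * \<beta>"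
proof -
  have "(\<Sum>j<n. f j * vv p q \<alpha> \<beta> j) = (\<Sum>j<n. (if j = p then f j * \<alpha> else 0) + (if j = q then f j * \<beta> else 0))"
    unfolding vv_def by (intro sum.cong) (auto simp: distrib_left)
  also have "\<dots> = f p * \<alpha> + f q * \<beta>" using assms by (auto simp: sum.distrib algebra_simps)
  finally show ?thesis .
qed

lemma quad_vv: assumes "A \<in> carrier_mat n n" "p < n" "q < n"
  shows "(\<Sum>i<n. \<Sum>j<n. cnj (vec n (vv p q \<alpha> \<beta>) $ i) * A $$ (i, j) * vec n (vv p q \<alpha> \<beta>) $ j)
    = cnj \<alpha> * (A $$ (p,p) * \<alpha> + A $$ (p,q) * \<beta>) + cnj \<beta> * (A $$ (q,p) * \<alpha> + A $$ (q,q) * \<beta>)"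
proof -
  have "(\<Sum>i<n. \<Sum>j<n. cnj (vec n (vv p q \<alpha> \<beta>) $ i) * A $$ (i, j) * vec n (vv p q \<alpha> \<beta>) $ j)
     = (\<Sum>i<n. cnj (vv p q \<alpha> \<beta> i) * (\<Sum>j<n. A $$ (i, j) * vv p q \<alpha> \<beta> j))"
    by (intro sum.cong refl) (simp add: sum_distrib_left mult.assoc)
  also have "\<dots> = (\<Sum>i<n. (A $$ (p,i) * \<alpha> + A $$ (q,i) * \<beta>) * 0 + cnj (vv p q \<alpha> \<beta> i) * (A $$ (i,p) * \<alpha> + A $$ (i,q) * \<beta>))"
    using assms by (intro sum.cong refl) (simp add: sum_vv)
  also have "\<dots> = (\<Sum>i<n. (A $$ (i,p) * \<alpha> + A $$ (i,q) * \<beta>) * cnj (vv p q \<alpha> \<beta> i))"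
    by (simp add: mult.commute)
  also have "\<dots> = (\<Sum>i<n. (A $$ (i,p) * \<alpha> + A $$ (i,q) * \<beta>) * vv p q (cnj \<alpha>) (cnj \<beta>) i)"
    unfolding vv_def by (intro sum.cong refl) auto
  also have "\<dots> = (A $$ (p,p) * \<alpha> + A $$ (p,q) * \<beta>) * cnj \<alpha> + (A $$ (q,p) * \<alpha> + A $$ (q,q) * \<beta>) * cnj \<beta>"
    by (rule sum_vv[OF assms(2,3)])
  also have "\<dots> = cnj \<alpha> * (A $$ (p,p) * \<alpha> + A $$ (p,q) * \<beta>) + cnj \<beta> * (A $$ (q,p) * \<alpha> + A $$ (q,q) * \<beta>)"
    by (simp add: mult.commute)
  finally show ?thesis .
qed

lemma psd_herm: assumes "psd n A" "p < n" "q < n"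
  shows "A $$ (q,p) = cnj (A $$ (p,q))"
proof -
  have cA: "A \<in> carrier_mat n n" using assms psd_carrier by blast
  have Q: "Im (cnj \<alpha> * (A $$ (p,p) * \<alpha> + A $$ (p,q) * \<beta>) + cnj \<beta> * (A $$ (q,p) * \<alpha> + A $$ (q,q) * \<beta>)) = 0"
    for \<alpha> \<beta>
  proof -
    have "vec n (vv p q \<alpha> \<beta>) \<in> carrier_vec n" by simp
    hence "Im (\<Sum>i<n. \<Sum>j<n. cnj (vec n (vv p q \<alpha> \<beta>) $ i) * A $$ (i, j) * vec n (vv p q \<alpha> \<beta>) $ j) = 0"
      using assms(1) unfolding psd_def Let_def by blast
    thus ?thesis by (simp only: quad_vv[OF cA assms(2,3)])
  qed
  have Qp: "Im (A $$ (p,p)) = 0" and Qq: "Im (A $$ (q,q)) = 0"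
    using Q[of 1 0] Q[of 0 1] by simp_all
  have Q1: "Im (A $$ (p,q)) + Im (A $$ (q,p)) = 0" using Q[of 1 1] Qp Qq by simp
  have Q2: "Re (A $$ (p,q)) - Re (A $$ (q,p)) = 0" using Q[of 1 \<i>] Qp Qq by simp
  show ?thesis using Q1 Q2 by (intro complex_eqI) auto
qed

definition Pr :: "nat \<Rightarrow> real \<Rightarrow> (nat \<Rightarrow> complex) \<Rightarrow> complex mat" where
  "Pr n r v = mat n n (\<lambda>(p,q). complex_of_real r * (v p * cnj (v q)))"

lemma psd_Pr: assumes "r \<ge> 0" shows "psd n (Pr n r v)"
  unfolding psd_def Let_def
proof (intro conjI ballI)
  show "Pr n r v \<in> carrier_mat n n" unfolding Pr_def by simp
  fix w :: "complex vec" assume "w \<in> carrier_vec n"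
  define s where "s = (\<Sum>i<n. cnj (w $ i) * v i)"
  have "(\<Sum>i<n. \<Sum>j<n. cnj (w $ i) * Pr n r v $$ (i, j) * w $ j) =
        (\<Sum>i<n. \<Sum>j<n. complex_of_real r * ((cnj (w $ i) * v i) * (cnj (v j) * w $ j)))"
    unfolding Pr_def by (intro sum.cong refl) (simp add: mult_ac)
  also have "\<dots> = complex_of_real r * (\<Sum>i<n. \<Sum>j<n. (cnj (w $ i) * v i) * (cnj (v j) * w $ j))"
    by (simp add: sum_distrib_left)
  also have "\<dots> = complex_of_real r * (s * cnj s)"
    unfolding s_def by (simp add: sum_product mult.commute)
  also have "\<dots> = complex_of_real (r * (cmod s)^2)"
    using complex_norm_square[of s] by simp
  finally have e: "(\<Sum>i<n. \<Sum>j<n. cnj (w $ i) * Pr n r v $$ (i, j) * w $ j) = complex_of_real (r * (cmod s)^2)" .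
  show "Im (\<Sum>i<n. \<Sum>j<n. cnj (w $ i) * Pr n r v $$ (i, j) * w $ j) = 0" unfolding e by simp
  show "Re (\<Sum>i<n. \<Sum>j<n. cnj (w $ i) * Pr n r v $$ (i, j) * w $ j) \<ge> 0" unfolding e using assms by simp
qed




lemma tr_Pr: assumes "p < n" "q < n"
  shows "tr (Pr n r (vv p q \<alpha> \<beta>)) = complex_of_real r * (cnj (vv p q \<alpha> \<beta> p) * \<alpha> + cnj (vv p q \<alpha> \<beta> q) * \<beta>)"
proof -
  have "tr (Pr n r (vv p q \<alpha> \<beta>)) = (\<Sum>t<n. (complex_of_real r * cnj (vv p q \<alpha> \<beta> t)) * vv p q \<alpha> \<beta> t)"
    unfolding tr_def Pr_def by (intro sum.cong) (auto simp: mult_ac)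
  also have "\<dots> = complex_of_real r * cnj (vv p q \<alpha> \<beta> p) * \<alpha> + complex_of_real r * cnj (vv p q \<alpha> \<beta> q) * \<beta>"
    by (rule sum_vv[OF assms])
  finally show ?thesis by (simp add: algebra_simps)
qed

lemma dens_D1: "i < d \<Longrightarrow> Pr d 1 (vv i i 1 0) \<in> Dens d"
  unfolding Dens_def density_def using psd_Pr[of 1 d] tr_Pr[of i d i 1 1 0] by (simp add: vv_def)

lemma dens_A: "i < d \<Longrightarrow> j < d \<Longrightarrow> i \<noteq> j \<Longrightarrow> Pr d (1/2) (vv i j 1 1) \<in> Dens d"
  unfolding Dens_def density_def using psd_Pr[of "1/2" d] tr_Pr[of i d j "1/2" 1 1] by (simp add: vv_def)

lemma dens_B: "i < d \<Longrightarrow> j < d \<Longrightarrow> i \<noteq> j \<Longrightarrow> Pr d (1/2) (vv i j 1 \<i>) \<in> Dens d"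
  unfolding Dens_def density_def using psd_Pr[of "1/2" d] tr_Pr[of i d j "1/2" 1 \<i>] by (simp add: vv_def)

lemma Dens_carrier: "Dens d \<subseteq> carrier_mat d d"
  unfolding Dens_def density_def using psd_carrier by blast

lemma unit_diag: "i < d \<Longrightarrow> unit_op d i i = Pr d 1 (vv i i 1 0)"
  unfolding unit_op_def Pr_def vv_def by (intro eq_matI) auto

lemma unit_off: assumes "i < d" "j < d" "i \<noteq> j"
  shows "unit_op d i j = Pr d (1/2) (vv i j 1 1) + \<i> \<cdot>\<^sub>m Pr d (1/2) (vv i j 1 \<i>)
     + (- (1 + \<i>) / 2) \<cdot>\<^sub>m Pr d 1 (vv i i 1 0) + (- (1 + \<i>) / 2) \<cdot>\<^sub>m Pr d 1 (vv j j 1 0)"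
proof (rule eq_matI)
  fix p q assume pq: "p < dim_row (Pr d (1/2) (vv i j 1 1) + \<i> \<cdot>\<^sub>m Pr d (1/2) (vv i j 1 \<i>)
     + (- (1 + \<i>) / 2) \<cdot>\<^sub>m Pr d 1 (vv i i 1 0) + (- (1 + \<i>) / 2) \<cdot>\<^sub>m Pr d 1 (vv j j 1 0))"
    "q < dim_col (Pr d (1/2) (vv i j 1 1) + \<i> \<cdot>\<^sub>m Pr d (1/2) (vv i j 1 \<i>)
     + (- (1 + \<i>) / 2) \<cdot>\<^sub>m Pr d 1 (vv i i 1 0) + (- (1 + \<i>) / 2) \<cdot>\<^sub>m Pr d 1 (vv j j 1 0))"
  hence pq': "p < d" "q < d" unfolding Pr_def by auto
  have e: "(Pr d (1/2) (vv i j 1 1) + \<i> \<cdot>\<^sub>m Pr d (1/2) (vv i j 1 \<i>)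
     + (- (1 + \<i>) / 2) \<cdot>\<^sub>m Pr d 1 (vv i i 1 0) + (- (1 + \<i>) / 2) \<cdot>\<^sub>m Pr d 1 (vv j j 1 0)) $$ (p,q)
     = 1/2 * (vv i j 1 1 p * cnj (vv i j 1 1 q)) + \<i> * (1/2 * (vv i j 1 \<i> p * cnj (vv i j 1 \<i> q)))
       + (- (1 + \<i>) / 2) * (vv i i 1 0 p * cnj (vv i i 1 0 q)) + (- (1 + \<i>) / 2) * (vv j j 1 0 p * cnj (vv j j 1 0 q))"
    using pq' unfolding Pr_def by simp
  have "unit_op d i j $$ (p,q) = 1/2 * (vv i j 1 1 p * cnj (vv i j 1 1 q)) + \<i> * (1/2 * (vv i j 1 \<i> p * cnj (vv i j 1 \<i> q)))
       + (- (1 + \<i>) / 2) * (vv i i 1 0 p * cnj (vv i i 1 0 q)) + (- (1 + \<i>) / 2) * (vv j j 1 0 p * cnj (vv j j 1 0 q))"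
  proof -
    have u: "unit_op d i j $$ (p,q) = (if p = i \<and> q = j then 1 else 0)" using pq' unfolding unit_op_def by simp
    consider "p = i" "q = i" | "p = i" "q = j" | "p = j" "q = i" | "p = j" "q = j" | "p \<noteq> i" "p \<noteq> j" | "q \<noteq> i" "q \<noteq> j" by blast
    thus ?thesis
    proof cases
      case 1 thus ?thesis using u assms(3) unfolding vv_def by (simp add: field_simps)
    next
      case 2 thus ?thesis using u assms(3) unfolding vv_def by (simp add: field_simps)
    next
      case 3 thus ?thesis using u assms(3) unfolding vv_def by (simp add: field_simps)
    next
      case 4 thus ?thesis using u assms(3) unfolding vv_def by (simp add: field_simps)
    next
      case 5 thus ?thesis using u assms(3) unfolding vv_def by simp
    next
      case 6 thus ?thesis using u assms(3) unfolding vv_def by simp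
    qed
  qed
  thus "unit_op d i j $$ (p,q) = (Pr d (1/2) (vv i j 1 1) + \<i> \<cdot>\<^sub>m Pr d (1/2) (vv i j 1 \<i>)
     + (- (1 + \<i>) / 2) \<cdot>\<^sub>m Pr d 1 (vv i i 1 0) + (- (1 + \<i>) / 2) \<cdot>\<^sub>m Pr d 1 (vv j j 1 0)) $$ (p,q)"
    using e by simp
qed (auto simp: unit_op_def Pr_def)

lemma unit_cspan: assumes "i < d" "j < d" shows "unit_op d i j \<in> cspan d (Dens d)"
proof (cases "i = j")
  case True thus ?thesis using assms unit_diag dens_D1 Dens_carrier by (metis cspan.gen subsetD)
next
  case False
  have g: "X \<in> Dens d \<Longrightarrow> X \<in> cspan d (Dens d)" for X using Dens_carrier by (auto intro: cspan.gen)
  show ?thesis unfolding unit_off[OF assms False]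
    by (intro cspan.add cspan.smult g dens_A dens_B dens_D1 assms False)
qed

lemma all_cspan: assumes "Y \<in> carrier_mat d d" shows "Y \<in> cspan d (Dens d)"
proof -
  have "mat d d (\<lambda>(p,q). \<Sum>x\<in>{..<d}\<times>{..<d}. Y $$ x * unit_op d (fst x) (snd x) $$ (p,q)) \<in> cspan d (Dens d)"
    by (rule cspan_sum) (auto intro: unit_cspan)
  thus ?thesis using unit_expand[OF assms] by simp
qed




lemma sum_mult_split: "(\<Sum>p<(m::nat)*n. f p) = (\<Sum>i<m. \<Sum>k<n. f (i*n+k))"
proof (induction m)
  case (Suc m)
  have "(\<Sum>p<Suc m * n. f p) = (\<Sum>p<m*n + n. f p)" by (simp add: add.commute)
  also have "\<dots> = (\<Sum>p<m*n. f p) + (\<Sum>k<n. f (m*n+k))" by (rule sum_split_add)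
  finally show ?case using Suc by simp
qed simp

lemma tr_kron: assumes "A \<in> carrier_mat m m" "B \<in> carrier_mat n n"
  shows "tr (kron A B) = tr A * tr B"
proof -
  have "tr (kron A B) = (\<Sum>p<m*n. kron A B $$ (p,p))" unfolding tr_def using kron_carrier[OF assms] by simp
  also have "\<dots> = (\<Sum>i<m. \<Sum>k<n. kron A B $$ (i*n+k,i*n+k))" by (rule sum_mult_split)
  also have "\<dots> = (\<Sum>i<m. \<Sum>k<n. A $$ (i,i) * B $$ (k,k))"
    by (intro sum.cong refl) (simp add: kron_index2[OF assms])
  also have "\<dots> = tr A * tr B" unfolding tr_def using assms by (simp add: sum_product)
  finally show ?thesis .
qed

definition herm :: "nat \<Rightarrow> complex mat \<Rightarrow> bool" where
  "herm n A \<longleftrightarrow> A \<in> carrier_mat n n \<and> (\<forall>p<n. \<forall>q<n. A $$ (q,p) = cnj (A $$ (p,q)))"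

lemma herm_kron: assumes "herm m A" "herm n B" shows "herm (m*n) (kron A B)"
  unfolding herm_def
proof (intro conjI allI impI)
  have c: "A \<in> carrier_mat m m" "B \<in> carrier_mat n n" using assms herm_def by auto
  show "kron A B \<in> carrier_mat (m*n) (m*n)" by (rule kron_carrier[OF c])
  fix p q assume pq: "p < m*n" "q < m*n"
  hence "n > 0" by (cases n) auto
  hence "p div n < m" "q div n < m" "p mod n < n" "q mod n < n" using pq by (auto simp: less_mult_imp_div_less)
  moreover have "A $$ (q div n, p div n) = cnj (A $$ (p div n, q div n))"
    using assms(1) calculation unfolding herm_def by blast
  moreover have "B $$ (q mod n, p mod n) = cnj (B $$ (p mod n, q mod n))"
    using assms(2) calculation unfolding herm_def by blast
  ultimately show "kron A B $$ (q,p) = cnj (kron A B $$ (p,q))"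
    using kron_index[OF c pq] kron_index[OF c pq(2,1)] by simp
qed

lemma dens_herm: assumes "\<rho> \<in> Dens n" shows "herm n \<rho>"
proof -
  have p: "psd n \<rho>" using assms unfolding Dens_def density_def by simp
  show ?thesis unfolding herm_def using psd_carrier[OF p] psd_herm[OF p] by blast
qed

lemma tl_herm_tr: "set xs \<subseteq> Dens d \<Longrightarrow> herm (d^length xs) (tensor_list xs) \<and> tr (tensor_list xs) = 1"
proof (induction xs)
  case Nil
  have "herm 1 (1\<^sub>m 1)" unfolding herm_def by auto
  moreover have "tr (1\<^sub>m 1) = 1" unfolding tr_def by simp
  ultimately show ?case by simp
next
  case (Cons x xs)
  have xD: "x \<in> Dens d" using Cons.prems by simp
  have hx: "herm d x" by (rule dens_herm[OF xD])
  have tx: "tr x = 1" using xD unfolding Dens_def density_def by simp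
  have xsD: "set xs \<subseteq> Dens d" using Cons.prems by simp
  have ih: "herm (d^length xs) (tensor_list xs)" "tr (tensor_list xs) = 1" using Cons.IH[OF xsD] by blast+
  have cx: "x \<in> carrier_mat d d" using hx unfolding herm_def by blast
  have ct: "tensor_list xs \<in> carrier_mat (d^length xs) (d^length xs)" using ih(1) unfolding herm_def by blast
  have "herm (d * d^length xs) (kron x (tensor_list xs))" by (rule herm_kron[OF hx ih(1)])
  moreover have "tr (kron x (tensor_list xs)) = 1"
    using tr_kron[OF cx ct] tx ih(2) by simp
  ultimately show ?case by simp
qed




lemma sum4: "(\<Sum>i\<in>A. \<Sum>j\<in>B. \<Sum>k\<in>C. \<Sum>l\<in>D. f i j k l) = (\<Sum>x\<in>A\<times>B\<times>C\<times>D. case x of (i,j,k,l) \<Rightarrow> f i j k l)"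
  by (simp add: sum.cartesian_product)

lemma mt_expand: assumes "linear_op_map m \<Phi>" "linear_op_map n \<Psi>"
  shows "map_tensor m \<Phi> n \<Psi> X = mat (m*n) (m*n) (\<lambda>(p,q). \<Sum>x\<in>{..<m}\<times>{..<m}\<times>{..<n}\<times>{..<n}.
     (case x of (i,j,k,l) \<Rightarrow> X $$ (i*n+k, j*n+l)) * (case x of (i,j,k,l) \<Rightarrow> kron (\<Phi> (unit_op m i j)) (\<Psi> (unit_op n k l))) $$ (p,q))"
proof (rule eq_matI)
  fix p q assume "p < dim_row (mat (m*n) (m*n) (\<lambda>(p,q). \<Sum>x\<in>{..<m}\<times>{..<m}\<times>{..<n}\<times>{..<n}.
     (case x of (i,j,k,l) \<Rightarrow> X $$ (i*n+k, j*n+l)) * (case x of (i,j,k,l) \<Rightarrow> kron (\<Phi> (unit_op m i j)) (\<Psi> (unit_op n k l))) $$ (p,q)))"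
    "q < dim_col (mat (m*n) (m*n) (\<lambda>(p,q). \<Sum>x\<in>{..<m}\<times>{..<m}\<times>{..<n}\<times>{..<n}.
     (case x of (i,j,k,l) \<Rightarrow> X $$ (i*n+k, j*n+l)) * (case x of (i,j,k,l) \<Rightarrow> kron (\<Phi> (unit_op m i j)) (\<Psi> (unit_op n k l))) $$ (p,q)))"
  hence pq: "p < m*n" "q < m*n" by auto
  have "map_tensor m \<Phi> n \<Psi> X $$ (p,q) = (\<Sum>i<m. \<Sum>j<m. \<Sum>k<n. \<Sum>l<n.
       X $$ (i * n + k, j * n + l) * \<Phi> (unit_op m i j) $$ (p div n, q div n)
         * \<Psi> (unit_op n k l) $$ (p mod n, q mod n))" unfolding map_tensor_def using pq by simp
  also have "\<dots> = (\<Sum>x\<in>{..<m}\<times>{..<m}\<times>{..<n}\<times>{..<n}. case x of (i,j,k,l) \<Rightarrow>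
       X $$ (i * n + k, j * n + l) * \<Phi> (unit_op m i j) $$ (p div n, q div n)
         * \<Psi> (unit_op n k l) $$ (p mod n, q mod n))" by (rule sum4)
  also have "\<dots> = (\<Sum>x\<in>{..<m}\<times>{..<m}\<times>{..<n}\<times>{..<n}.
     (case x of (i,j,k,l) \<Rightarrow> X $$ (i*n+k, j*n+l)) * (case x of (i,j,k,l) \<Rightarrow> kron (\<Phi> (unit_op m i j)) (\<Psi> (unit_op n k l))) $$ (p,q))"
  proof (intro sum.cong refl)
    fix x assume "x \<in> {..<m}\<times>{..<m}\<times>{..<n}\<times>{..<n}"
    then obtain i j k l where x: "x = (i,j,k,l)" by (cases x) auto
    have c1: "\<Phi> (unit_op m i j) \<in> carrier_mat m m" by (rule lin_carrier[OF assms(1) unit_op_carrier])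
    have c2: "\<Psi> (unit_op n k l) \<in> carrier_mat n n" by (rule lin_carrier[OF assms(2) unit_op_carrier])
    show "(case x of (i,j,k,l) \<Rightarrow>
       X $$ (i * n + k, j * n + l) * \<Phi> (unit_op m i j) $$ (p div n, q div n)
         * \<Psi> (unit_op n k l) $$ (p mod n, q mod n)) =
       (case x of (i,j,k,l) \<Rightarrow> X $$ (i*n+k, j*n+l)) * (case x of (i,j,k,l) \<Rightarrow> kron (\<Phi> (unit_op m i j)) (\<Psi> (unit_op n k l))) $$ (p,q)"
      unfolding x using kron_index[OF c1 c2 pq] by (simp add: mult.assoc)
  qed
  finally show "map_tensor m \<Phi> n \<Psi> X $$ (p,q) = mat (m*n) (m*n) (\<lambda>(p,q). \<Sum>x\<in>{..<m}\<times>{..<m}\<times>{..<n}\<times>{..<n}.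
     (case x of (i,j,k,l) \<Rightarrow> X $$ (i*n+k, j*n+l)) * (case x of (i,j,k,l) \<Rightarrow> kron (\<Phi> (unit_op m i j)) (\<Psi> (unit_op n k l))) $$ (p,q)) $$ (p,q)"
    using pq by simp
qed (auto simp: map_tensor_def)

lemma mtp_cspan: assumes lin: "linear_op_map d \<Delta>" and D: "\<And>Y. Y \<in> carrier_mat d d \<Longrightarrow> \<Delta> Y \<in> cspan d F'"
  shows "X \<in> carrier_mat (d^N) (d^N) \<Longrightarrow> map_tensor_pow d \<Delta> N X \<in> cspan (d^N) (tensor_pow_set F' N)"
proof (induction N arbitrary: X)
  case 0
  have X: "X = X $$ (0,0) \<cdot>\<^sub>m 1\<^sub>m 1" using 0 by (intro eq_matI) auto
  have "1\<^sub>m 1 \<in> tensor_pow_set F' 0" unfolding tensor_pow_set_def by force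
  hence "1\<^sub>m 1 \<in> cspan 1 (tensor_pow_set F' 0)" by (intro cspan.gen) auto
  hence "X $$ (0,0) \<cdot>\<^sub>m 1\<^sub>m 1 \<in> cspan 1 (tensor_pow_set F' 0)" by (rule cspan.smult)
  thus ?case using X by simp
next
  case (Suc N)
  let ?n = "d^N"
  let ?\<Psi> = "map_tensor_pow d \<Delta> N"
  have X: "X \<in> carrier_mat (d * ?n) (d * ?n)" using Suc.prems by simp
  have "map_tensor d \<Delta> ?n ?\<Psi> X \<in> cspan (d * ?n) (kset d ?n F' (tensor_pow_set F' N))"
    unfolding mt_expand[OF lin mtp_linear]
  proof (rule cspan_sum)
    fix x assume "x \<in> {..<d}\<times>{..<d}\<times>{..<?n}\<times>{..<?n}"
    then obtain i j k l where x: "x = (i,j,k,l)" by (cases x) auto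
    have "kron (\<Delta> (unit_op d i j)) (?\<Psi> (unit_op ?n k l)) \<in> cspan (d * ?n) (kset d ?n F' (tensor_pow_set F' N))"
      by (rule cspan_kron[OF D Suc.IH]) (rule unit_op_carrier)+
    thus "(case x of (i,j,k,l) \<Rightarrow> kron (\<Delta> (unit_op d i j)) (?\<Psi> (unit_op ?n k l))) \<in> cspan (d * ?n) (kset d ?n F' (tensor_pow_set F' N))"
      unfolding x by simp
  qed simp
  moreover have "kset d ?n F' (tensor_pow_set F' N) \<inter> carrier_mat (d * ?n) (d * ?n) \<subseteq> tensor_pow_set F' (Suc N)"
  proof
    fix Z assume "Z \<in> kset d ?n F' (tensor_pow_set F' N) \<inter> carrier_mat (d * ?n) (d * ?n)"
    then obtain s xs where "Z = kron s (tensor_list xs)" "s \<in> F'" "length xs = N" "set xs \<subseteq> F'"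
      unfolding kset_def tensor_pow_set_def by blast
    hence "Z = tensor_list (s # xs)" "length (s#xs) = Suc N" "set (s#xs) \<subseteq> F'" by auto
    thus "Z \<in> tensor_pow_set F' (Suc N)" unfolding tensor_pow_set_def by blast
  qed
  ultimately have "map_tensor d \<Delta> ?n ?\<Psi> X \<in> cspan (d * ?n) (tensor_pow_set F' (Suc N))"
    by (rule cspan_mono)
  thus ?case by simp
qed




theorem theorem1:
  fixes d N :: nat
    and F F' FN :: "complex mat set"
    and \<Delta> :: "complex mat \<Rightarrow> complex mat"
  assumes "d \<ge> 1" and "N \<ge> 1"
    and "F \<subseteq> Dens d"
    and "FN \<subseteq> Dens (d ^ N)"
    and "F' \<subseteq> F" and "affine_set d F'"
    and "RC_map d F F' \<Delta>"
    and "\<forall>X \<in> carrier_mat d d. \<Delta> (\<Delta> X) = \<Delta> X"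
    and "F' = {\<sigma> \<in> Dens d. \<Delta> \<sigma> = \<sigma>}"
  shows "breakable d N FN \<Delta> \<longleftrightarrow> Aff (d ^ N) (tensor_pow_set F' N) - FN \<noteq> {}"
proof -
  have lin: "linear_op_map d \<Delta>" using assms(7) unfolding RC_map_def channel_def by blast
  have toF: "\<And>\<rho>. \<rho> \<in> Dens d \<Longrightarrow> \<Delta> \<rho> \<in> F" using assms(7) unfolding RC_map_def by blast
  have fix': "\<And>\<sigma>. \<sigma> \<in> F' \<Longrightarrow> \<Delta> \<sigma> = \<sigma>" using assms(7) unfolding RC_map_def by blast
  have F'D: "F' \<subseteq> Dens d" using assms(3,5) by blast
  have F'C: "F' \<subseteq> carrier_mat d d" using F'D Dens_carrier by blast
  let ?T = "tensor_pow_set F' N"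
  let ?M = "map_tensor_pow d \<Delta> N"
  have T: "\<And>\<sigma>. \<sigma> \<in> ?T \<Longrightarrow> herm (d^N) \<sigma> \<and> tr \<sigma> = 1 \<and> ?M \<sigma> = \<sigma>"
  proof -
    fix \<sigma> assume "\<sigma> \<in> ?T"
    then obtain xs where xs: "\<sigma> = tensor_list xs" "length xs = N" "set xs \<subseteq> F'"
      unfolding tensor_pow_set_def by blast
    have "herm (d^N) \<sigma> \<and> tr \<sigma> = 1" using tl_herm_tr[of xs d] xs F'D by auto
    moreover have "?M \<sigma> = tensor_list (map \<Delta> xs)" using mtp_tl[OF lin, of xs] xs F'C by auto
    moreover have "map \<Delta> xs = xs" using xs(3) fix' by (induction xs) auto
    ultimately show "herm (d^N) \<sigma> \<and> tr \<sigma> = 1 \<and> ?M \<sigma> = \<sigma>" using xs by simp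
  qed
  have TC: "\<sigma> \<in> carrier_mat (d^N) (d^N)" if "\<sigma> \<in> ?T" for \<sigma>
  proof -
    have "herm (d^N) \<sigma>" using T[OF that] by blast
    thus ?thesis unfolding herm_def by blast
  qed
  have DS: "\<And>Y. Y \<in> carrier_mat d d \<Longrightarrow> \<Delta> Y \<in> cspan d F'"
  proof -
    fix Y :: "complex mat" assume Y: "Y \<in> carrier_mat d d"
    show "\<Delta> Y \<in> cspan d F'"
    proof (rule cspan_lin[OF lin all_cspan[OF Y]])
      fix s assume s: "s \<in> Dens d" "s \<in> carrier_mat d d"
      have "\<Delta> s \<in> Dens d" using toF[OF s(1)] assms(3) by blast
      moreover have "\<Delta> (\<Delta> s) = \<Delta> s" using assms(8) s(2) by blast
      ultimately have "\<Delta> s \<in> F'" using assms(9) by blast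
      thus "\<Delta> s \<in> cspan d F'" using F'C by (intro cspan.gen) auto
    qed
  qed
  show ?thesis
  proof
    assume "breakable d N FN \<Delta>"
    then obtain \<rho> where \<rho>: "\<rho> \<in> Dens (d^N)" "\<rho> \<notin> FN" "?M \<rho> = \<rho>" unfolding breakable_def by blast
    have h\<rho>: "herm (d^N) \<rho>" by (rule dens_herm[OF \<rho>(1)])
    have c\<rho>: "\<rho> \<in> carrier_mat (d^N) (d^N)" using h\<rho> unfolding herm_def by blast
    have tr\<rho>: "tr \<rho> = 1" using \<rho>(1) unfolding Dens_def density_def by simp
    have "?M \<rho> \<in> cspan (d^N) ?T" by (rule mtp_cspan[OF lin DS c\<rho>])
    hence "\<rho> \<in> cspan (d^N) ?T" using \<rho>(3) by simp
    from cspan_msum[OF this] obtain k :: nat and c \<sigma> where k: "\<forall>a<k. \<sigma> a \<in> ?T" "\<rho> = mat (d^N) (d^N) (\<lambda>(p,q). \<Sum>a<k. c a * \<sigma> a $$ (p,q))"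
      by blast
    have ent: "\<rho> $$ (p,q) = (\<Sum>a<k. c a * \<sigma> a $$ (p,q))" if "p < d^N" "q < d^N" for p q
      by (simp only: k(2) index_mat(1)[OF that] prod.case)
    have real: "\<rho> $$ (p,q) = (\<Sum>a<k. complex_of_real (Re (c a)) * \<sigma> a $$ (p,q))" if pq: "p < d^N" "q < d^N" for p q
    proof -
      have "\<rho> $$ (p,q) = cnj (\<rho> $$ (q,p))" using h\<rho> pq unfolding herm_def by blast
      also have "\<dots> = (\<Sum>a<k. cnj (c a) * cnj (\<sigma> a $$ (q,p)))" using ent[OF pq(2,1)] by simp
      also have "\<dots> = (\<Sum>a<k. cnj (c a) * \<sigma> a $$ (p,q))"
      proof (intro sum.cong refl)
        fix a assume "a \<in> {..<k}"
        hence "herm (d^N) (\<sigma> a)" using k(1) T by blast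
        hence "\<sigma> a $$ (p,q) = cnj (\<sigma> a $$ (q,p))" using pq unfolding herm_def by blast
        thus "cnj (c a) * cnj (\<sigma> a $$ (q,p)) = cnj (c a) * \<sigma> a $$ (p,q)" by simp
      qed
      finally have e2: "\<rho> $$ (p,q) = (\<Sum>a<k. cnj (c a) * \<sigma> a $$ (p,q))" .
      have "2 * \<rho> $$ (p,q) = (\<Sum>a<k. (c a + cnj (c a)) * \<sigma> a $$ (p,q))"
        using ent[OF pq] e2 by (simp add: sum.distrib ring_distribs)
      also have "\<dots> = (\<Sum>a<k. 2 * (complex_of_real (Re (c a)) * \<sigma> a $$ (p,q)))"
        by (intro sum.cong refl) (simp add: complex_add_cnj)
      finally show ?thesis by (simp add: sum_distrib_left[symmetric])
    qed
    have "tr \<rho> = (\<Sum>p<d^N. \<Sum>a<k. complex_of_real (Re (c a)) * \<sigma> a $$ (p,p))"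
      unfolding tr_def using c\<rho> real by simp
    also have "\<dots> = (\<Sum>a<k. \<Sum>p<d^N. complex_of_real (Re (c a)) * \<sigma> a $$ (p,p))"
      by (rule sum.swap)
    also have "\<dots> = (\<Sum>a<k. complex_of_real (Re (c a)) * tr (\<sigma> a))"
    proof (intro sum.cong refl)
      fix a assume "a \<in> {..<k}"
      hence "\<sigma> a \<in> carrier_mat (d^N) (d^N)" using TC k(1) by blast
      thus "(\<Sum>p<d^N. complex_of_real (Re (c a)) * \<sigma> a $$ (p,p)) = complex_of_real (Re (c a)) * tr (\<sigma> a)"
        unfolding tr_def by (simp add: sum_distrib_left)
    qed
    also have "\<dots> = (\<Sum>a<k. complex_of_real (Re (c a)))"
    proof (intro sum.cong refl)
      fix a assume "a \<in> {..<k}"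
      hence "tr (\<sigma> a) = 1" using T k(1) by blast
      thus "complex_of_real (Re (c a)) * tr (\<sigma> a) = complex_of_real (Re (c a))" by simp
    qed
    finally have "complex_of_real (\<Sum>a<k. Re (c a)) = 1" using tr\<rho> by simp
    hence s1: "(\<Sum>a<k. Re (c a)) = 1" using of_real_eq_1_iff by blast
    have "\<rho> = mat (d^N) (d^N) (\<lambda>(p,q). \<Sum>a<k. complex_of_real (Re (c a)) * \<sigma> a $$ (p,q))"
      using c\<rho> real by (intro eq_matI) auto
    moreover have "density (d^N) \<rho>" using \<rho>(1) unfolding Dens_def by simp
    ultimately have "\<rho> \<in> Aff (d^N) ?T" unfolding Aff_def using k(1) s1 by blast
    thus "Aff (d ^ N) ?T - FN \<noteq> {}" using \<rho>(2) by blast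
  next
    assume "Aff (d ^ N) ?T - FN \<noteq> {}"
    then obtain \<rho> where \<rho>: "\<rho> \<in> Aff (d^N) ?T" "\<rho> \<notin> FN" by blast
    then obtain k :: nat and t \<sigma> where k: "density (d^N) \<rho>" "\<forall>a<k. \<sigma> a \<in> ?T"
      "\<rho> = mat (d^N) (d^N) (\<lambda>(p,q). \<Sum>a<k. complex_of_real (t a) * \<sigma> a $$ (p,q))"
      unfolding Aff_def by blast
    have "?M \<rho> = mat (d^N) (d^N) (\<lambda>(p,q). \<Sum>a<k. complex_of_real (t a) * ?M (\<sigma> a) $$ (p,q))"
      unfolding k(3) by (rule lin_sum[OF mtp_linear]) (use TC k(2) in auto)
    also have "\<dots> = mat (d^N) (d^N) (\<lambda>(p,q). \<Sum>a<k. complex_of_real (t a) * \<sigma> a $$ (p,q))"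
    proof -
      have "\<And>a. a < k \<Longrightarrow> ?M (\<sigma> a) = \<sigma> a" using T k(2) by blast
      hence "(\<lambda>(p,q). \<Sum>a<k. complex_of_real (t a) * ?M (\<sigma> a) $$ (p,q)) = (\<lambda>(p,q). \<Sum>a<k. complex_of_real (t a) * \<sigma> a $$ (p,q))"
        by (intro ext) (auto intro!: sum.cong)
      thus ?thesis by simp
    qed
    also have "\<dots> = \<rho>" using k(3) by simp
    finally have "?M \<rho> = \<rho>" .
    moreover have "\<rho> \<in> Dens (d^N)" using k(1) unfolding Dens_def by simp
    ultimately show "breakable d N FN \<Delta>" unfolding breakable_def using \<rho>(2) by blast
  qed
qed


end
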